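(* Let $u,v,p,q,r>1$ satisfy $\frac1u+\frac1v=1$ and $\frac1{u(p-1)}+\frac1{v(q-1)}=\frac1{r-1}$, let $p',q',r'$ be the conjugate exponents of $p,q,r$, and put $\alpha=\frac{q'}{v\sqrt{p'q'r'}}$, $\beta=\frac{r'}{\sqrt{p'q'r'}}$, $\gamma=\frac{p'}{u\sqrt{p'q'r'}}$. Then for all $s,t>0$, $$\frac{p^{1/p}q^{1/q}}{r^{1/r}}\cdot\frac{s^{1/p}t^{1/q}}{(s+t+\beta^2)^{1/r'}(\gamma^2s+\alpha^2t+st)^{1/r}}\le v^{\frac1r-\frac1p}u^{\frac1r-\frac1q},$$ with equality if and only if $s=\frac1{pv}$ and $t=\frac1{qu}$. In particular the supremum over $s,t>0$ of the left-hand side equals $v^{\frac1r-\frac1p}u^{\frac1r-\frac1q}$. *)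

theory Defs
  imports Complex_Main
begin

definition conj_exp :: "real \<Rightarrow> real" where
  "conj_exp p = p / (p - 1)"

definition lhsF :: "real \<Rightarrow> real \<Rightarrow> real \<Rightarrow> real \<Rightarrow> real \<Rightarrow> real \<Rightarrow> real \<Rightarrow> real" where
  "lhsF u v p q r s t =
     (let p' = conj_exp p; q' = conj_exp q; r' = conj_exp r;
          N = sqrt (p' * q' * r');
          \<alpha> = q' / (v * N); \<beta> = r' / N; \<gamma> = p' / (u * N)
      in (p powr (1/p) * q powr (1/q) / r powr (1/r)) *
         (s powr (1/p) * t powr (1/q) /
          ((s + t + \<beta>^2) powr (1/r') * (\<gamma>^2 * s + \<alpha>^2 * t + s * t) powr (1/r))))"

end

theory Submission
  imports Defs
begin

lemma amgm3:
  fixes w1 w2 w3 z1 z2 z3 :: real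
  assumes w: "w1>0" "w2>0" "w3>0" "w1+w2+w3=1" and z: "z1>0" "z2>0" "z3>0"
  shows "w1*ln z1 + w2*ln z2 + w3*ln z3 \<le> ln (w1*z1+w2*z2+w3*z3)"
    and "w1*ln z1 + w2*ln z2 + w3*ln z3 = ln (w1*z1+w2*z2+w3*z3) \<longleftrightarrow> (z1 = z2 \<and> z2 = z3)"
proof -
  define m where "m = w1*z1+w2*z2+w3*z3"
  have m: "m > 0" unfolding m_def using w z by (simp add: add_pos_pos)
  have e: "w1*((z1-m)/m) + w2*((z2-m)/m) + w3*((z3-m)/m) = 0"
  proof -
    have "w1*((z1-m)/m) + w2*((z2-m)/m) + w3*((z3-m)/m) = ((w1*z1+w2*z2+w3*z3) - (w1+w2+w3)*m)/m"
      by (simp add: diff_divide_distrib add_divide_distrib algebra_simps)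
    also have "\<dots> = 0" using w(4) by (simp add: m_def)
    finally show ?thesis .
  qed
  have sm: "w1*(ln z1 - ln m) + w2*(ln z2 - ln m) + w3*(ln z3 - ln m) = (w1*ln z1 + w2*ln z2 + w3*ln z3) - ln m"
  proof -
    have "w1*(ln z1 - ln m) + w2*(ln z2 - ln m) + w3*(ln z3 - ln m) = (w1*ln z1 + w2*ln z2 + w3*ln z3) - (w1+w2+w3)*ln m"
      by (simp add: algebra_simps)
    then show ?thesis using w(4) by simp
  qed
  have l1: "ln z1 - ln m \<le> (z1-m)/m" "ln z2 - ln m \<le> (z2-m)/m" "ln z3 - ln m \<le> (z3-m)/m"
    using ln_diff_le m z by auto
  have k1: "w1*(ln z1 - ln m) \<le> w1*((z1-m)/m)" using l1(1) w(1) by (intro mult_left_mono) auto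
  have k2: "w2*(ln z2 - ln m) \<le> w2*((z2-m)/m)" using l1(2) w(2) by (intro mult_left_mono) auto
  have k3: "w3*(ln z3 - ln m) \<le> w3*((z3-m)/m)" using l1(3) w(3) by (intro mult_left_mono) auto
  show le: "w1*ln z1 + w2*ln z2 + w3*ln z3 \<le> ln (w1*z1+w2*z2+w3*z3)"
    using k1 k2 k3 e sm unfolding m_def[symmetric] by linarith
  show "w1*ln z1 + w2*ln z2 + w3*ln z3 = ln (w1*z1+w2*z2+w3*z3) \<longleftrightarrow> (z1 = z2 \<and> z2 = z3)"
  proof
    assume eq: "w1*ln z1 + w2*ln z2 + w3*ln z3 = ln (w1*z1+w2*z2+w3*z3)"
    have "z1 = m \<and> z2 = m \<and> z3 = m"
    proof (rule ccontr)
      assume "\<not> ?thesis"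
      then consider "z1 \<noteq> m" | "z2 \<noteq> m" | "z3 \<noteq> m" by blast
      then have "w1*(ln z1 - ln m) < w1*((z1-m)/m) \<or> w2*(ln z2 - ln m) < w2*((z2-m)/m) \<or> w3*(ln z3 - ln m) < w3*((z3-m)/m)"
      proof cases
        case 1 then have "ln z1 - ln m < (z1-m)/m" using ln_diff_less m z by blast
        then show ?thesis using w(1) mult_strict_left_mono by blast
      next
        case 2 then have "ln z2 - ln m < (z2-m)/m" using ln_diff_less m z by blast
        then show ?thesis using w(2) mult_strict_left_mono by blast
      next
        case 3 then have "ln z3 - ln m < (z3-m)/m" using ln_diff_less m z by blast
        then show ?thesis using w(3) mult_strict_left_mono by blast
      qed
      then show False using k1 k2 k3 e sm eq unfolding m_def[symmetric] by linarith
    qed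
    then show "z1 = z2 \<and> z2 = z3" by simp
  next
    assume "z1 = z2 \<and> z2 = z3"
    then show "w1*ln z1 + w2*ln z2 + w3*ln z3 = ln (w1*z1+w2*z2+w3*z3)"
      using w(4) by (simp add: distrib_right[symmetric])
  qed
qed
lemma aux: fixes R x X :: real
  assumes "R \<noteq> 0" "R-1 \<noteq> 0" "x \<noteq> 0" "1-x\<noteq>0"
  shows "(R-1)/R * (X/(x*(1-x)*(R-1)/R)) = X/(x*(1-x))"
proof -
  have "x*(1-x)*(R-1)/R = (x*(1-x)) * ((R-1)/R)" by simp
  then have "X/(x*(1-x)*(R-1)/R) = X/(x*(1-x)) / ((R-1)/R)" by simp
  moreover have "(R-1)/R \<noteq> 0" using assms by simp
  ultimately show ?thesis by simp
qed

lemma linid: fixes a b s0 t0 X Y m w1 w2 w3 :: real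
  shows "a*(s0*X + t0*Y) + b*(m + (w1+w3)*X + (w2+w3)*Y) = b*m + (a*s0 + b*(w1+w3))*X + (a*t0 + b*(w2+w3))*Y"
  by (simp add: algebra_simps)

lemma finid: fixes L K ip iq ls lt a b S1 S2 D1 D2 U V m ls0 lt0 C :: real
  assumes h1: "L = K + ip*ls + iq*lt - a*S1 - b*S2" and h2: "D1 = S1 - U" and h3: "D2 = S2 - V"
    and h4: "a*U + b*V = b*m + ip*(ls - ls0) + iq*(lt - lt0)" and h5: "C = K + ip*ls0 + iq*lt0 - b*m"
  shows "L = C - a*D1 - b*D2"
proof -
  have "C - a*D1 - b*D2 = K + ip*ls0 + iq*lt0 - b*m - a*S1 - b*S2 + (a*U + b*V)"
    unfolding h2 h3 h5 by (simp add: algebra_simps)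
  also have "\<dots> = L" unfolding h4 h1 by (simp add: algebra_simps)
  finally show ?thesis by simp
qed

lemma identA:
  fixes P Q x R :: real
  assumes "P>1" "Q>1" "R = P*x+Q*(1-x)"
  shows "(P-1)*(1-x)/P + (Q-1)*x/Q + R/(P*Q) = 1"
  using assms by (simp add: field_simps)

lemma identB0:
  fixes P Q x :: real
  shows "P*x^2*(P-1)*(1-x) + Q*(1-x)^2*(Q-1)*x + (P-1)*(1-x)*(Q-1)*x*(P*x+Q*(1-x))
     = x*(1-x)*((P*x+Q*(1-x))-1)*P*Q"
  by (simp add: algebra_simps power2_eq_square)

lemma identB:
  fixes P Q x R :: real
  assumes "P>1" "Q>1" "R = P*x+Q*(1-x)" "R > 1"
  shows "(P*x^2/(Q*R))*((P-1)*(1-x)/P) + (Q*(1-x)^2/(P*R))*((Q-1)*x/Q) + ((P-1)*(1-x)/P)*((Q-1)*x/Q)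
     = x*(1-x)*(R-1)/R"
proof -
  have PQR: "P*Q*R \<noteq> 0" using assms by simp
  have "P*Q*R * ((P*x^2/(Q*R))*((P-1)*(1-x)/P) + (Q*(1-x)^2/(P*R))*((Q-1)*x/Q) + ((P-1)*(1-x)/P)*((Q-1)*x/Q))
     = P*x^2*(P-1)*(1-x) + Q*(1-x)^2*(Q-1)*x + (P-1)*(1-x)*(Q-1)*x*R"
    using assms by (simp add: field_simps)
  also have "\<dots> = x*(1-x)*(R-1)*P*Q"
    by (simp only: assms(3)) (rule identB0)
  also have "\<dots> = P*Q*R * (x*(1-x)*(R-1)/R)"
    using assms by simp
  finally show ?thesis using PQR mult_left_cancel by blast
qed

lemma identC1:
  fixes P Q x R :: real
  assumes "P>1" "Q>1" "R = P*x+Q*(1-x)" "R > 1" "0<x" "x<1"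
  shows "((P-1)*(1-x)/P)/R + ((P*x^2/(Q*R))*((P-1)*(1-x)/P) + ((P-1)*(1-x)/P)*((Q-1)*x/Q))/(x*(1-x)) = (P-1)/P"
proof -
  have nz: "x \<noteq> 0" "1-x \<noteq> 0" "P \<noteq> 0" "Q \<noteq> 0" "R \<noteq> 0" using assms by auto
  have "((P*x^2/(Q*R))*((P-1)*(1-x)/P) + ((P-1)*(1-x)/P)*((Q-1)*x/Q))/(x*(1-x))
      = x*(P-1)/(Q*R) + (P-1)*(Q-1)/(P*Q)"
    using nz by (simp add: field_simps power2_eq_square)
  moreover have "(P-1)*(1-x)/(P*R) + x*(P-1)/(Q*R) + (P-1)*(Q-1)/(P*Q) = (P-1)/P"
  proof -
    have e: "(P-1)*(1-x)*Q + x*(P-1)*P + (P-1)*(Q-1)*R = (P-1)*Q*R"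
      by (simp only: assms(3)) algebra
    have "(P-1)*(1-x)/(P*R) + x*(P-1)/(Q*R) + (P-1)*(Q-1)/(P*Q) = ((P-1)*(1-x)*Q + x*(P-1)*P + (P-1)*(Q-1)*R)/(P*Q*R)"
      using nz by (simp add: field_simps)
    also have "\<dots> = (P-1)/P" unfolding e using nz by simp
    finally show ?thesis .
  qed
  ultimately show ?thesis by simp
qed
lemma identC2:
  fixes P Q x R :: real
  assumes "P>1" "Q>1" "R = P*x+Q*(1-x)" "R > 1" "0<x" "x<1"
  shows "((Q-1)*x/Q)/R + ((Q*(1-x)^2/(P*R))*((Q-1)*x/Q) + ((P-1)*(1-x)/P)*((Q-1)*x/Q))/(x*(1-x)) = (Q-1)/Q"
proof -
  have nz: "x \<noteq> 0" "1-x \<noteq> 0" "P \<noteq> 0" "Q \<noteq> 0" "R \<noteq> 0" using assms by auto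
  have "((Q*(1-x)^2/(P*R))*((Q-1)*x/Q) + ((P-1)*(1-x)/P)*((Q-1)*x/Q))/(x*(1-x))
      = (1-x)*(Q-1)/(P*R) + (P-1)*(Q-1)/(P*Q)"
    using nz by (simp add: field_simps power2_eq_square)
  moreover have "(Q-1)*x/(Q*R) + (1-x)*(Q-1)/(P*R) + (P-1)*(Q-1)/(P*Q) = (Q-1)/Q"
  proof -
    have e: "(Q-1)*x*P + (1-x)*(Q-1)*Q + (P-1)*(Q-1)*R = (Q-1)*P*R"
      by (simp only: assms(3)) algebra
    have "(Q-1)*x/(Q*R) + (1-x)*(Q-1)/(P*R) + (P-1)*(Q-1)/(P*Q) = ((Q-1)*x*P + (1-x)*(Q-1)*Q + (P-1)*(Q-1)*R)/(P*Q*R)"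
      using nz by (simp add: field_simps)
    also have "\<dots> = (Q-1)/Q" unfolding e using nz by simp
    finally show ?thesis .
  qed
  ultimately show ?thesis by simp
qed
lemma lhsF_eq:
  fixes u v p q r s t :: real
  assumes "u>0" "v>0" "p>1" "q>1" "r>1"
  defines "P \<equiv> conj_exp p" and "Q \<equiv> conj_exp q" and "R \<equiv> conj_exp r"
  shows "lhsF u v p q r s t = (p powr (1/p) * q powr (1/q) / r powr (1/r)) *
         (s powr (1/p) * t powr (1/q) /
          ((s + t + R/(P*Q)) powr (1/R) * ((P*(1/u)^2/(Q*R)) * s + (Q*(1/v)^2/(P*R)) * t + s * t) powr (1/r)))"
proof -
  have pos: "P > 0" "Q > 0" "R > 0" using assms unfolding conj_exp_def by auto
  have N: "(sqrt (P*Q*R))^2 = P*Q*R" using pos by simp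
  have b: "(R / sqrt (P*Q*R))^2 = R/(P*Q)" using pos by (simp add: power_divide N power2_eq_square)
  have g: "(P / (u * sqrt (P*Q*R)))^2 = P*(1/u)^2/(Q*R)" using pos assms
    by (simp add: power_divide power_mult_distrib N) (simp add: power2_eq_square field_simps)
  have a: "(Q / (v * sqrt (P*Q*R)))^2 = Q*(1/v)^2/(P*R)" using pos assms
    by (simp add: power_divide power_mult_distrib N) (simp add: power2_eq_square field_simps)
  show ?thesis unfolding lhsF_def Let_def P_def[symmetric] Q_def[symmetric] R_def[symmetric]
    by (simp only: b g a)
qed

theorem mainTheorem10:
  fixes u v p q r :: real
  assumes "u > 1" "v > 1" "p > 1" "q > 1" "r > 1"
    and "1/u + 1/v = 1"
    and "1/(u*(p-1)) + 1/(v*(q-1)) = 1/(r-1)"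
  shows "(\<forall>s t. s > 0 \<longrightarrow> t > 0 \<longrightarrow>
            lhsF u v p q r s t \<le> v powr (1/r - 1/p) * u powr (1/r - 1/q)
          \<and> (lhsF u v p q r s t = v powr (1/r - 1/p) * u powr (1/r - 1/q)
               \<longleftrightarrow> s = 1/(p*v) \<and> t = 1/(q*u)))
       \<and> (SUP st \<in> {st :: real \<times> real. fst st > 0 \<and> snd st > 0}.
             lhsF u v p q r (fst st) (snd st))
         = v powr (1/r - 1/p) * u powr (1/r - 1/q)"
proof -
  define P where "P = conj_exp p"
  define Q where "Q = conj_exp q"
  define R where "R = conj_exp r"
  define x where "x = 1/u"
  have x: "0 < x" "x < 1" using assms(1) unfolding x_def by auto
  have vx: "1/v = 1 - x" using assms(6) unfolding x_def by simp
  have P1: "P - 1 = 1/(p-1)" "P > 1" using assms(3) unfolding P_def conj_exp_def by (auto simp: field_simps)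
  have Q1: "Q - 1 = 1/(q-1)" "Q > 1" using assms(4) unfolding Q_def conj_exp_def by (auto simp: field_simps)
  have R1: "R - 1 = 1/(r-1)" "R > 1" using assms(5) unfolding R_def conj_exp_def by (auto simp: field_simps)
  have ip: "1/p = (P-1)/P" using assms(3) unfolding P_def conj_exp_def by (auto simp: field_simps)
  have iq: "1/q = (Q-1)/Q" using assms(4) unfolding Q_def conj_exp_def by (auto simp: field_simps)
  have ir: "1/r = (R-1)/R" using assms(5) unfolding R_def conj_exp_def by (auto simp: field_simps)
  have Req: "R = P*x + Q*(1-x)"
  proof -
    have "x*(P-1) = 1/(u*(p-1))" unfolding x_def P1(1) by simp
    moreover have "(1-x)*(Q-1) = 1/(v*(q-1))" unfolding vx[symmetric] Q1(1) by simp
    ultimately have "x*(P-1) + (1-x)*(Q-1) = R - 1" using assms(7) R1(1) by simp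
    then show ?thesis by (simp add: algebra_simps)
  qed
  define B where "B = R/(P*Q)"
  define G where "G = P*x^2/(Q*R)"
  define A where "A = Q*(1-x)^2/(P*R)"
  define K where "K = p powr (1/p) * q powr (1/q) / r powr (1/r)"
  define s0 where "s0 = (P-1)*(1-x)/P"
  define t0 where "t0 = (Q-1)*x/Q"
  define M where "M = G*s0 + A*t0 + s0*t0"
  define RHS where "RHS = v powr (1/r - 1/p) * u powr (1/r - 1/q)"
  have pos: "B > 0" "G > 0" "A > 0" "K > 0" "s0 > 0" "t0 > 0" "RHS > 0"
  proof -
    show "B > 0" unfolding B_def using P1 Q1 R1 by simp
    show "G > 0" unfolding G_def using P1 Q1 R1 x by simp
    show "A > 0" unfolding A_def using P1 Q1 R1 x by simp
    show "K > 0" unfolding K_def using assms(3,4,5) by simp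
    show "s0 > 0" unfolding s0_def using P1(2) x by simp
    show "t0 > 0" unfolding t0_def using Q1(2) x by simp
    show "RHS > 0" unfolding RHS_def using assms(1,2) by simp
  qed
  have Mpos: "M > 0" using pos unfolding M_def by (simp add: add_pos_pos)
  have lhs: "lhsF u v p q r s t = K * (s powr (1/p) * t powr (1/q) /
          ((s + t + B) powr (1/R) * (G * s + A * t + s * t) powr (1/r)))" for s t
    using lhsF_eq[of u v p q r s t] assms unfolding B_def G_def A_def K_def P_def Q_def R_def x_def
    by (simp add: vx[unfolded x_def])
  have sumA: "s0 + t0 + B = 1" unfolding s0_def t0_def B_def using identA[OF P1(2) Q1(2) Req] .
  have Meq: "M = x*(1-x)*(R-1)/R"
    unfolding M_def G_def A_def s0_def t0_def using identB[OF P1(2) Q1(2) Req R1(2)] .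
  have c1: "(1/R)*s0 + (1/r)*((G*s0 + s0*t0)/M) = 1/p"
  proof -
    have Hc: "(1/r)*((G*s0 + s0*t0)/M) = (G*s0 + s0*t0)/(x*(1-x))"
    proof -
      have nz: "R - 1 \<noteq> 0" "R \<noteq> 0" "x \<noteq> 0" "1 - x \<noteq> 0" using R1 x by auto
      show ?thesis unfolding Meq ir using aux[OF nz(2) nz(1) nz(3) nz(4)] by simp
    qed
    moreover have I: "s0/R + (G*s0 + s0*t0)/(x*(1-x)) = (P-1)/P"
      using identC1[OF P1(2) Q1(2) Req R1(2) x] unfolding G_def s0_def t0_def .
    have E: "(1/R)*s0 = s0/R" by simp
    show ?thesis unfolding E Hc ip by (rule I)
  qed
  have c2: "(1/R)*t0 + (1/r)*((A*t0 + s0*t0)/M) = 1/q"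
  proof -
    have Hc: "(1/r)*((A*t0 + s0*t0)/M) = (A*t0 + s0*t0)/(x*(1-x))"
    proof -
      have nz: "R - 1 \<noteq> 0" "R \<noteq> 0" "x \<noteq> 0" "1 - x \<noteq> 0" using R1 x by auto
      show ?thesis unfolding Meq ir using aux[OF nz(2) nz(1) nz(3) nz(4)] by simp
    qed
    moreover have I: "t0/R + (A*t0 + s0*t0)/(x*(1-x)) = (Q-1)/Q"
      using identC2[OF P1(2) Q1(2) Req R1(2) x] unfolding A_def s0_def t0_def .
    have E: "(1/R)*t0 = t0/R" by simp
    show ?thesis unfolding E Hc iq by (rule I)
  qed
  have s0e: "s0 = 1/(p*v)"
  proof -
    have "1/(p*v) = (1/p)*(1/v)" by simp
    also have "\<dots> = (P-1)/P*(1-x)" unfolding ip vx ..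
    also have "\<dots> = s0" unfolding s0_def by simp
    finally show ?thesis by simp
  qed
  have t0e: "t0 = 1/(q*u)"
  proof -
    have "1/(q*u) = (1/q)*(1/u)" by simp
    also have "\<dots> = (Q-1)/Q*x" unfolding iq x_def ..
    also have "\<dots> = t0" unfolding t0_def by simp
    finally show ?thesis by simp
  qed
  have Me: "M = 1/(r*u*v)"
  proof -
    have "1/(r*u*v) = (1/r)*(1/u)*(1/v)" by simp
    also have "\<dots> = (R-1)/R*x*(1-x)" unfolding ir vx x_def ..
    also have "\<dots> = M" unfolding Meq by simp
    finally show ?thesis by simp
  qed
  define Cst where "Cst = ln K + (1/p)*ln s0 + (1/q)*ln t0 - (1/r)*ln M"
  have CstE: "Cst = ln RHS"
  proof -
    have hK: "ln K = (1/p)*ln p + (1/q)*ln q - (1/r)*ln r"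
      unfolding K_def using assms by (simp add: ln_mult ln_div ln_powr)
    have hs: "ln s0 = - ln p - ln v" unfolding s0e using assms by (simp add: ln_div ln_mult)
    have ht: "ln t0 = - ln q - ln u" unfolding t0e using assms by (simp add: ln_div ln_mult)
    have hM: "ln M = - ln r - ln u - ln v" unfolding Me using assms by (simp add: ln_div ln_mult)
    have hR: "ln RHS = (1/r - 1/p)*ln v + (1/r - 1/q) * ln u"
      unfolding RHS_def using assms by (simp add: ln_mult ln_powr)
    show ?thesis unfolding Cst_def hK hs ht hM hR by (simp add: algebra_simps)
  qed
  have key: "lhsF u v p q r s t \<le> RHS \<and> (lhsF u v p q r s t = RHS \<longleftrightarrow> s = s0 \<and> t = t0)"
    if st: "s > 0" "t > 0" for s t
  proof -
    define S1 where "S1 = s + t + B"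
    define S2 where "S2 = G * s + A * t + s * t"
    have S: "S1 > 0" "S2 > 0" using st pos unfolding S1_def S2_def by (auto simp: add_pos_pos)
    have Lpos: "lhsF u v p q r s t > 0" unfolding lhs using st S pos S1_def S2_def by simp
    have lnL: "ln (lhsF u v p q r s t) = ln K + (1/p)*ln s + (1/q)*ln t - (1/R)*ln S1 - (1/r)*ln S2"
      unfolding lhs S1_def[symmetric] S2_def[symmetric] using st S pos
      by (simp add: ln_mult ln_div ln_powr)
    define D1 where "D1 = ln S1 - (s0*ln (s/s0) + t0*ln (t/t0) + B*ln 1)"
    define w1 where "w1 = G*s0/M"
    define w2 where "w2 = A*t0/M"
    define w3 where "w3 = s0*t0/M"
    define D2 where "D2 = ln S2 - (w1*ln (M*s/s0) + w2*ln (M*t/t0) + w3*ln (M*s*t/(s0*t0)))"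
    have w: "w1 > 0" "w2 > 0" "w3 > 0" "w1+w2+w3 = 1"
      using pos Mpos unfolding w1_def w2_def w3_def M_def by (auto simp: add_divide_distrib[symmetric])
    have S1e: "S1 = s0*(s/s0) + t0*(t/t0) + B*1" unfolding S1_def using pos by simp
    have S2e: "S2 = w1*(M*s/s0) + w2*(M*t/t0) + w3*(M*s*t/(s0*t0))"
      unfolding S2_def w1_def w2_def w3_def using pos Mpos by (simp add: field_simps)
    have D1: "D1 \<ge> 0" "D1 = 0 \<longleftrightarrow> s = s0 \<and> t = t0"
    proof -
      have h1: "s/s0 > 0" "t/t0 > 0" using st pos by auto
      note A1 = amgm3(1)[OF pos(5) pos(6) pos(1) sumA h1(1) h1(2) zero_less_one]
      note A2 = amgm3(2)[OF pos(5) pos(6) pos(1) sumA h1(1) h1(2) zero_less_one]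
      show "D1 \<ge> 0" unfolding D1_def S1e using A1 by linarith
      have "D1 = 0 \<longleftrightarrow> (s0*ln (s/s0) + t0*ln (t/t0) + B*ln 1 = ln (s0*(s/s0) + t0*(t/t0) + B*1))"
        unfolding D1_def S1e by linarith
      also have "\<dots> \<longleftrightarrow> (s/s0 = t/t0 \<and> t/t0 = 1)" using A2 .
      also have "\<dots> \<longleftrightarrow> s = s0 \<and> t = t0" using pos by (auto simp: field_simps)
      finally show "D1 = 0 \<longleftrightarrow> s = s0 \<and> t = t0" .
    qed
    have h2: "M*s/s0 > 0" "M*t/t0 > 0" "M*s*t/(s0*t0) > 0" using st pos Mpos by auto
    have D2: "D2 \<ge> 0" "s = s0 \<and> t = t0 \<Longrightarrow> D2 = 0"
    proof -
      show "D2 \<ge> 0" unfolding D2_def S2e using amgm3(1)[OF w h2] by linarith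
      show "D2 = 0" if "s = s0 \<and> t = t0"
      proof -
        have zz: "M*s/s0 = M*t/t0 \<and> M*t/t0 = M*s*t/(s0*t0)" using that pos by auto
        then have "w1*ln (M*s/s0) + w2*ln (M*t/t0) + w3*ln (M*s*t/(s0*t0))
            = ln (w1*(M*s/s0) + w2*(M*t/t0) + w3*(M*s*t/(s0*t0)))"
          using amgm3(2)[OF w h2] by blast
        then show ?thesis unfolding D2_def S2e by linarith
      qed
    qed
    have lns: "ln (M*s/s0) = ln M + ln s - ln s0" "ln (M*t/t0) = ln M + ln t - ln t0"
       "ln (M*s*t/(s0*t0)) = ln M + ln s + ln t - ln s0 - ln t0"
       "ln (s/s0) = ln s - ln s0" "ln (t/t0) = ln t - ln t0"
      using st pos Mpos by (simp_all add: ln_mult ln_div)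
    have eq: "ln (lhsF u v p q r s t) = Cst - (1/R)*D1 - (1/r)*D2"
    proof -
      have "(1/R)*(s0*(ln s - ln s0) + t0*(ln t - ln t0)) + (1/r)*(ln M + (w1+w3)*(ln s - ln s0) + (w2+w3)*(ln t - ln t0))
          = (1/r)*ln M + ((1/R)*s0 + (1/r)*(w1+w3))*(ln s - ln s0) + ((1/R)*t0 + (1/r)*(w2+w3))*(ln t - ln t0)"
        by (rule linid)
      also have "\<dots> = (1/r)*ln M + (1/p)*(ln s - ln s0) + (1/q)*(ln t - ln t0)"
        using c1 c2 unfolding w1_def w2_def w3_def by (simp add: add_divide_distrib)
      finally have X: "(1/R)*(s0*(ln s - ln s0) + t0*(ln t - ln t0)) + (1/r)*(ln M + (w1+w3)*(ln s - ln s0) + (w2+w3)*(ln t - ln t0))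
          = (1/r)*ln M + (1/p)*(ln s - ln s0) + (1/q)*(ln t - ln t0)" .
      have Y: "w1*ln (M*s/s0) + w2*ln (M*t/t0) + w3*ln (M*s*t/(s0*t0)) = ln M + (w1+w3)*(ln s - ln s0) + (w2+w3)*(ln t - ln t0)"
        unfolding lns using w(4) by (simp add: algebra_simps) (metis distrib_right mult_1 add.assoc)
      have h2: "D1 = ln S1 - (s0*(ln s - ln s0) + t0*(ln t - ln t0))" unfolding D1_def lns by simp
      have h3: "D2 = ln S2 - (ln M + (w1+w3)*(ln s - ln s0) + (w2+w3)*(ln t - ln t0))" unfolding D2_def Y ..
      show ?thesis by (rule finid[OF lnL h2 h3 X Cst_def])
    qed
    have Rr: "1/R > 0" "1/r > 0" using R1 assms by auto
    have n1: "(1/R)*D1 \<ge> 0" using Rr(1) D1(1) by simp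
    have n2: "(1/r)*D2 \<ge> 0" using Rr(2) D2(1) by simp
    have "ln (lhsF u v p q r s t) \<le> ln RHS" using eq CstE n1 n2 by linarith
    then have le: "lhsF u v p q r s t \<le> RHS" using Lpos pos by simp
    have "lhsF u v p q r s t = RHS \<longleftrightarrow> ln (lhsF u v p q r s t) = ln RHS" using Lpos pos by simp
    also have "\<dots> \<longleftrightarrow> (1/R)*D1 + (1/r)*D2 = 0" using eq CstE by auto
    also have "\<dots> \<longleftrightarrow> (1/R)*D1 = 0 \<and> (1/r)*D2 = 0" using add_nonneg_eq_0_iff[OF n1 n2] .
    also have "\<dots> \<longleftrightarrow> D1 = 0 \<and> D2 = 0" using Rr by simp
    also have "\<dots> \<longleftrightarrow> s = s0 \<and> t = t0" using D1(2) D2(2) by blast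
    finally show ?thesis using le by blast
  qed
  have part1: "\<forall>s t. s > 0 \<longrightarrow> t > 0 \<longrightarrow>
            lhsF u v p q r s t \<le> RHS \<and> (lhsF u v p q r s t = RHS \<longleftrightarrow> s = 1/(p*v) \<and> t = 1/(q*u))"
  proof (intro allI impI)
    fix s t :: real assume st: "s > 0" "t > 0"
    show "lhsF u v p q r s t \<le> RHS \<and> (lhsF u v p q r s t = RHS \<longleftrightarrow> s = 1/(p*v) \<and> t = 1/(q*u))"
      using key[OF st] unfolding s0e t0e .
  qed
  have part2: "(SUP st \<in> {st :: real \<times> real. fst st > 0 \<and> snd st > 0}.
             lhsF u v p q r (fst st) (snd st)) = RHS"
  proof (rule cSup_eq_maximum)
    show "RHS \<in> (\<lambda>st. lhsF u v p q r (fst st) (snd st)) ` {st :: real \<times> real. fst st > 0 \<and> snd st > 0}"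
    proof (rule image_eqI[where x="(s0,t0)"])
      show "RHS = lhsF u v p q r (fst (s0,t0)) (snd (s0,t0))" using key[OF pos(5) pos(6)] by simp
      show "(s0,t0) \<in> {st :: real \<times> real. fst st > 0 \<and> snd st > 0}" using pos by simp
    qed
  next
    fix y assume "y \<in> (\<lambda>st. lhsF u v p q r (fst st) (snd st)) ` {st :: real \<times> real. fst st > 0 \<and> snd st > 0}"
    then obtain st where st: "fst st > 0" "snd st > 0" and y: "y = lhsF u v p q r (fst st) (snd st)" by blast
    show "y \<le> RHS" unfolding y using key[OF st] by simp
  qed
  show ?thesis by (rule conjI[OF part1[unfolded RHS_def] part2[unfolded RHS_def]])
qed

end
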